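(* For every integer $m\ge2$ and every $\alpha\in[0,1]$, every deterministic social choice rule on $m$ candidates has distortion at least $2+\alpha-2(1-\alpha)/\lfloor m\rfloor_{\mathrm{even}}$ on $\alpha$-decisive metric spaces, where $\lfloor m\rfloor_{\mathrm{even}}$ is the largest even integer at most $m$.
   Context: An election: voters $V=\{1,\dots,n\}$, a fixed finite set $C$ of $m$ candidates, a profile $\sigma$ of linear orders over $C$. A distance function $d$ on $V\cup C$ is nonnegative, symmetric and satisfies the triangle inequality (co-location allowed); it is consistent with $\sigma$ if $d(i,c)\le d(i,c')$ whenever $i$ ranks $c$ above $c'$. $\mathrm{top}(i)$ is $i$'s first choice. $d$ is $\alpha$-decisive if $d(i,\mathrm{top}(i))\le\alpha\,d(i,c)$ for every voter $i$ and every $c\ne\mathrm{top}(i)$. $\mathrm{SC}(c)=\sum_{i\in V}d(i,c)$. A deterministic social choice rule maps each profile (any number of voters) to a candidate; its distortion on $\alpha$-decisive metric spaces is $\sup_\sigma\sup_d \mathrm{SC}(f(\sigma))/\min_c\mathrm{SC}(c)$ over $\alpha$-decisive $d$ consistent with $\sigma$. *)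

theory Defs
  imports Main Complex_Main
begin

(* Points of the space V \<union> C: voters are Inl i (i < n, voters 0-indexed),
   candidates are Inr c (c \<in> C). *)

(* A linear order over C, represented as the ranking list (best first). *)
definition is_ranking :: "'c set \<Rightarrow> 'c list \<Rightarrow> bool" where
  "is_ranking C r \<longleftrightarrow> distinct r \<and> set r = C"

definition is_profile :: "'c set \<Rightarrow> 'c list list \<Rightarrow> bool" where
  "is_profile C \<sigma> \<longleftrightarrow> (\<forall>r \<in> set \<sigma>. is_ranking C r)"

definition is_rule :: "'c set \<Rightarrow> ('c list list \<Rightarrow> 'c) \<Rightarrow> bool" where
  "is_rule C f \<longleftrightarrow> (\<forall>\<sigma>. is_profile C \<sigma> \<and> \<sigma> \<noteq> [] \<longrightarrow> f \<sigma> \<in> C)"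

definition points :: "nat \<Rightarrow> 'c set \<Rightarrow> (nat + 'c) set" where
  "points n C = Inl ` {..<n} \<union> Inr ` C"

(* Distance function (pseudo-metric, co-location allowed) on V \<union> C. *)
definition is_metric_on :: "(nat + 'c) set \<Rightarrow> ((nat + 'c) \<Rightarrow> (nat + 'c) \<Rightarrow> real) \<Rightarrow> bool" where
  "is_metric_on P d \<longleftrightarrow>
     (\<forall>x \<in> P. d x x = 0) \<and>
     (\<forall>x \<in> P. \<forall>y \<in> P. 0 \<le> d x y \<and> d x y = d y x) \<and>
     (\<forall>x \<in> P. \<forall>y \<in> P. \<forall>z \<in> P. d x z \<le> d x y + d y z)"

definition consistent :: "'c list list \<Rightarrow> ((nat + 'c) \<Rightarrow> (nat + 'c) \<Rightarrow> real) \<Rightarrow> bool" where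
  "consistent \<sigma> d \<longleftrightarrow>
     (\<forall>i < length \<sigma>. \<forall>j k. j < k \<and> k < length (\<sigma> ! i) \<longrightarrow>
        d (Inl i) (Inr (\<sigma> ! i ! j)) \<le> d (Inl i) (Inr (\<sigma> ! i ! k)))"

definition top :: "'c list list \<Rightarrow> nat \<Rightarrow> 'c" where
  "top \<sigma> i = hd (\<sigma> ! i)"

definition decisive :: "real \<Rightarrow> 'c set \<Rightarrow> 'c list list \<Rightarrow> ((nat + 'c) \<Rightarrow> (nat + 'c) \<Rightarrow> real) \<Rightarrow> bool" where
  "decisive \<alpha> C \<sigma> d \<longleftrightarrow>
     (\<forall>i < length \<sigma>. \<forall>c \<in> C. c \<noteq> top \<sigma> i \<longrightarrow>
        d (Inl i) (Inr (top \<sigma> i)) \<le> \<alpha> * d (Inl i) (Inr c))"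

definition SC :: "'c list list \<Rightarrow> ((nat + 'c) \<Rightarrow> (nat + 'c) \<Rightarrow> real) \<Rightarrow> 'c \<Rightarrow> real" where
  "SC \<sigma> d c = (\<Sum>i < length \<sigma>. d (Inl i) (Inr c))"

(* "The distortion of f on \<alpha>-decisive metric spaces is at least B", i.e.
   sup over instances of SC(f \<sigma>) / min_c SC(c) is \<ge> B (a ratio x/0 with x > 0
   counting as +\<infinity>): for every c < B some instance has SC(f \<sigma>) > c * min SC. *)
definition distortion_at_least :: "'c set \<Rightarrow> real \<Rightarrow> ('c list list \<Rightarrow> 'c) \<Rightarrow> real \<Rightarrow> bool" where
  "distortion_at_least C \<alpha> f B \<longleftrightarrow>
     (\<forall>c < B. \<exists>\<sigma> d. is_profile C \<sigma> \<and> \<sigma> \<noteq> [] \<and>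
        is_metric_on (points (length \<sigma>) C) d \<and> consistent \<sigma> d \<and> decisive \<alpha> C \<sigma> d \<and>
        SC \<sigma> d (f \<sigma>) > c * Min (SC \<sigma> d ` C))"

definition floor_even :: "nat \<Rightarrow> nat" where
  "floor_even m = 2 * (m div 2)"

end

theory Submission
  imports Defs
begin

definition tdist :: "('b \<times> real) \<Rightarrow> ('b \<times> real) \<Rightarrow> real" where
  "tdist p q = (if fst p = fst q then \<bar>snd p - snd q\<bar> else snd p + snd q)"

lemma tdist_metric:
  assumes "\<And>x. 0 \<le> snd (p x)"
  shows "is_metric_on P (\<lambda>x y. tdist (p x) (p y))"
  unfolding is_metric_on_def tdist_def
proof (intro conjI ballI)
  fix x y z
  have hx: "0 \<le> snd (p x)" and hy: "0 \<le> snd (p y)" and hz: "0 \<le> snd (p z)" using assms by auto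
  show "(if fst (p x) = fst (p z) then \<bar>snd (p x) - snd (p z)\<bar> else snd (p x) + snd (p z))
        \<le> (if fst (p x) = fst (p y) then \<bar>snd (p x) - snd (p y)\<bar> else snd (p x) + snd (p y)) +
           (if fst (p y) = fst (p z) then \<bar>snd (p y) - snd (p z)\<bar> else snd (p y) + snd (p z))"
    using hx hy hz by (auto simp: abs_if)
  show "0 \<le> (if fst (p x) = fst (p y) then \<bar>snd (p x) - snd (p y)\<bar> else snd (p x) + snd (p y))"
    using hx hy by auto
  show "(if fst (p x) = fst (p y) then \<bar>snd (p x) - snd (p y)\<bar> else snd (p x) + snd (p y)) =
        (if fst (p y) = fst (p x) then \<bar>snd (p y) - snd (p x)\<bar> else snd (p y) + snd (p x))"
    by auto
next
  fix x show "(if fst (p x) = fst (p x) then \<bar>snd (p x) - snd (p x)\<bar> else snd (p x) + snd (p x)) = 0"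
    by simp
qed

lemma sorted_const: "\<forall>y\<in>set ys. \<phi> y = (a::real) \<Longrightarrow> sorted (map \<phi> ys)"
  by (induction ys) auto

lemma sorted_blocks:
  fixes \<phi> :: "'a \<Rightarrow> real"
  assumes "\<phi> x \<le> a" "\<forall>y\<in>set ys. \<phi> y = a" "\<forall>y\<in>set zs. \<phi> y = b" "\<forall>y\<in>set us. \<phi> y = c"
    "a \<le> b" "b \<le> c"
  shows "sorted (map \<phi> (x # ys @ zs @ us))"
  using assms sorted_const[of ys \<phi> a] sorted_const[of zs \<phi> b] sorted_const[of us \<phi> c]
  by (auto simp: sorted_append)

lemma sorted_consistent:
  fixes \<phi> :: "'a \<Rightarrow> real"
  assumes "sorted (map \<phi> r)" "j < k" "k < length r"
  shows "\<phi> (r ! j) \<le> \<phi> (r ! k)"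
  using sorted_nth_mono[OF assms(1), of j k] assms by auto



locale cons =
  fixes L :: "'c list" and t :: nat and s :: real
  assumes dL: "distinct L" and lenL: "2*t \<le> length L" and t1: "1 \<le> t"
    and s0: "0 \<le> s" and s1: "s \<le> 1"
begin

definition "P1 = take t L"
definition "P2 = take t (drop t L)"
definition "El = drop (2*t) L"

lemma L_split: "L = P1 @ P2 @ El"
proof -
  have "drop (2*t) L = drop t (drop t L)" by (simp add: mult_2)
  then show ?thesis unfolding P1_def P2_def El_def
    by (metis append_take_drop_id)
qed

lemma dists: "distinct P1" "distinct P2" "distinct El"
  "set P1 \<inter> set P2 = {}" "set P1 \<inter> set El = {}" "set P2 \<inter> set El = {}"
proof -
  have d: "distinct (P1 @ P2 @ El)" using dL L_split by metis
  show "distinct P1" "distinct P2" "distinct El"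
    "set P1 \<inter> set P2 = {}" "set P1 \<inter> set El = {}" "set P2 \<inter> set El = {}"
    using d by auto
qed

lemma setL: "set L = set P1 \<union> set P2 \<union> set El"
  using L_split by (metis Un_assoc set_append)

lemma lens: "length P1 = t" "length P2 = t"
  using lenL unfolding P1_def P2_def by auto

lemma cards: "card (set P1) = t" "card (set P2) = t"
  using dists lens by (simp_all add: distinct_card)

lemma nthP1: "i < t \<Longrightarrow> L ! i \<in> set P1"
  using lens(1) unfolding P1_def by (metis nth_mem nth_take)

lemma nthP2: "t \<le> i \<Longrightarrow> i < 2*t \<Longrightarrow> L ! i \<in> set P2"
proof -
  assume a: "t \<le> i" "i < 2*t"
  have "P2 ! (i - t) = L ! i" unfolding P2_def using a lenL by auto
  moreover have "i - t < length P2" using a lens by auto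
  ultimately show ?thesis by (metis nth_mem)
qed

lemma img: "nth L ` {..<2*t} = set P1 \<union> set P2"
proof
  show "nth L ` {..<2*t} \<subseteq> set P1 \<union> set P2"
  proof
    fix a assume "a \<in> nth L ` {..<2*t}"
    then obtain i where "i < 2*t" "a = L ! i" by auto
    then show "a \<in> set P1 \<union> set P2" using nthP1 nthP2 by (cases "i < t") auto
  qed
next
  show "set P1 \<union> set P2 \<subseteq> nth L ` {..<2*t}"
  proof
    fix a assume "a \<in> set P1 \<union> set P2"
    hence "a \<in> set (take (2*t) L)" unfolding P1_def P2_def by (simp add: mult_2 take_add)
    then obtain i where "i < length (take (2*t) L)" "take (2*t) L ! i = a"
      by (metis in_set_conv_nth)
    then show "a \<in> nth L ` {..<2*t}" by auto
  qed
qed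

lemma sum_voters: "(\<Sum>i<2*t. g (L ! i)) = (\<Sum>a\<in>set P1. g a) + (\<Sum>a\<in>set P2. g a)"
proof -
  have inj: "inj_on (nth L) {..<2*t}" using dL lenL by (intro inj_on_nth) auto
  have "(\<Sum>i<2*t. g (L ! i)) = (\<Sum>a\<in>nth L ` {..<2*t}. g a)"
    using sum.reindex[OF inj, of g] by simp
  also have "\<dots> = (\<Sum>a\<in>set P1. g a) + (\<Sum>a\<in>set P2. g a)"
    unfolding img by (rule sum.union_disjoint) (use dists in auto)
  finally show ?thesis .
qed

definition own :: "nat \<Rightarrow> 'c list" where "own i = (if i < t then P1 else P2)"
definition oth :: "nat \<Rightarrow> 'c list" where "oth i = (if i < t then P2 else P1)"
definition rk :: "nat \<Rightarrow> 'c list" where "rk i = L ! i # remove1 (L ! i) (own i) @ oth i @ El"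
definition "sig = map rk [0..<2*t]"

lemma len_sig: "length sig = 2*t" unfolding sig_def by simp
lemma sig_nth: "i < 2*t \<Longrightarrow> sig ! i = rk i" unfolding sig_def by simp
lemma top_sig: "i < 2*t \<Longrightarrow> top sig i = L ! i" unfolding top_def by (simp add: sig_nth rk_def)

lemma own_mem: "i < 2*t \<Longrightarrow> L ! i \<in> set (own i)"
  unfolding own_def using nthP1 nthP2 by auto

lemma rk_ranking: "i < 2*t \<Longrightarrow> is_ranking (set L) (rk i)"
  unfolding is_ranking_def rk_def own_def oth_def using dists setL nthP1[of i] nthP2[of i]
  by (auto simp: distinct_remove1)

lemma profile: "is_profile (set L) sig"
  unfolding is_profile_def sig_def using rk_ranking by auto

lemma sig_ne: "sig \<noteq> []" using len_sig t1 by auto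


definition vpos :: "'c set \<Rightarrow> 'c \<Rightarrow> 'c option \<times> real" where
  "vpos A a = (if a \<in> A then (Some a, 1 - s) else (None, 1))"
definition cpos :: "'c set \<Rightarrow> 'c set \<Rightarrow> 'c \<Rightarrow> 'c option \<times> real" where
  "cpos A B c = (if c \<in> A then (Some c, 1) else if c \<in> B then (None, 1) else (Some c, 2))"
definition pp :: "'c set \<Rightarrow> 'c set \<Rightarrow> nat + 'c \<Rightarrow> 'c option \<times> real" where
  "pp A B x = (case x of Inl i \<Rightarrow> vpos A (L ! i) | Inr c \<Rightarrow> cpos A B c)"
definition dd :: "'c set \<Rightarrow> 'c set \<Rightarrow> nat + 'c \<Rightarrow> nat + 'c \<Rightarrow> real" where
  "dd A B x y = tdist (pp A B x) (pp A B y)"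

lemma dd_metric: "is_metric_on P (dd A B)"
  unfolding dd_def
  by (rule tdist_metric) (use s0 s1 in \<open>auto simp: pp_def vpos_def cpos_def split: sum.splits\<close>)

lemma dd_vc: "dd A B (Inl i) (Inr c) = tdist (vpos A (L ! i)) (cpos A B c)"
  unfolding dd_def pp_def by simp

lemma FA: "a \<in> A \<Longrightarrow> A \<inter> B = {} \<Longrightarrow> tdist (vpos A a) (cpos A B c) =
   (if c = a then s else if c \<in> A \<or> c \<in> B then 2 - s else 3 - s)"
  using s0 s1 by (auto simp: tdist_def vpos_def cpos_def)

lemma FB: "a \<notin> A \<Longrightarrow> A \<inter> B = {} \<Longrightarrow> tdist (vpos A a) (cpos A B c) =
   (if c \<in> B then 0 else if c \<in> A then 2 else 3)"
  using s0 s1 by (auto simp: tdist_def vpos_def cpos_def)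

context
  fixes A B
  assumes AB: "(A = set P1 \<and> B = set P2) \<or> (A = set P2 \<and> B = set P1)"
begin

lemma AB_disj: "A \<inter> B = {}" using AB dists by auto
lemma voterAB: "i < 2*t \<Longrightarrow> L ! i \<in> A \<union> B" using AB nthP1[of i] nthP2[of i] by (cases "i < t") auto
lemma ownA: "i < 2*t \<Longrightarrow> L ! i \<in> A \<Longrightarrow> set (own i) = A \<and> set (oth i) = B"
  using AB nthP1[of i] nthP2[of i] dists unfolding own_def oth_def by (cases "i < t") auto
lemma ownB: "i < 2*t \<Longrightarrow> L ! i \<notin> A \<Longrightarrow> set (own i) = B \<and> set (oth i) = A"
  using AB nthP1[of i] nthP2[of i] dists unfolding own_def oth_def by (cases "i < t") auto
lemma FA': "a \<in> A \<Longrightarrow> tdist (vpos A a) (cpos A B c) =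
   (if c = a then s else if c \<in> A \<or> c \<in> B then 2 - s else 3 - s)"
  using FA AB_disj by blast
lemma FB': "a \<in> B \<Longrightarrow> tdist (vpos A a) (cpos A B c) =
   (if c \<in> B then 0 else if c \<in> A then 2 else 3)"
  using FB AB_disj by blast
lemma El_out: "c \<in> set El \<Longrightarrow> c \<notin> A \<and> c \<notin> B" using AB dists by auto

lemma sorted_rk: "i < 2*t \<Longrightarrow> sorted (map (\<lambda>c. dd A B (Inl i) (Inr c)) (rk i))"
proof -
  assume i: "i < 2*t"
  show ?thesis
  proof (cases "L ! i \<in> A")
    case True
    note F = FA[OF True AB_disj]
    have o: "set (own i) = A" "set (oth i) = B" using ownA[OF i True] by auto
    have dO: "distinct (own i)" using dists unfolding own_def by auto
    show ?thesis unfolding rk_def dd_vc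
      by (rule sorted_blocks[where a="2 - s" and b="2-s" and c="3-s"])
         (use s0 s1 o dO AB_disj El_out own_mem[OF i] in \<open>auto simp: F\<close>)
  next
    case False
    note F = FB[OF False AB_disj]
    have o: "set (own i) = B" "set (oth i) = A" using ownB[OF i False] by auto
    have dO: "distinct (own i)" using dists unfolding own_def by auto
    have "L ! i \<in> B" using voterAB[OF i] False by auto
    then show ?thesis unfolding rk_def dd_vc
      by (intro sorted_blocks[where a="0" and b="2" and c="3"])
         (use s0 s1 o dO AB_disj El_out in \<open>auto simp: F\<close>)
  qed
qed

lemma consistent_dd: "consistent sig (dd A B)"
  unfolding consistent_def len_sig
proof (intro allI impI)
  fix i j k assume i: "i < 2*t" and jk: "j < k \<and> k < length (sig ! i)"
  show "dd A B (Inl i) (Inr (sig ! i ! j)) \<le> dd A B (Inl i) (Inr (sig ! i ! k))"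
    using sorted_consistent[OF sorted_rk[OF i], of j k] jk by (simp add: sig_nth[OF i])
qed

lemma decisive_dd:
  assumes "0 \<le> \<alpha>" "s = \<alpha> * (2 - s)"
  shows "decisive \<alpha> (set L) sig (dd A B)"
  unfolding decisive_def len_sig
proof (intro allI impI ballI)
  fix i c assume i: "i < 2*t" and c: "c \<in> set L" "c \<noteq> top sig i"
  have ci: "c \<noteq> L ! i" using c top_sig[OF i] by auto
  show "dd A B (Inl i) (Inr (top sig i)) \<le> \<alpha> * dd A B (Inl i) (Inr c)"
    unfolding top_sig[OF i] dd_vc
  proof (cases "L ! i \<in> A")
    case True
    note F = FA[OF True AB_disj]
    have "s \<le> \<alpha> * (3 - s)" using assms s1 by (simp add: algebra_simps)
    then show "tdist (vpos A (L ! i)) (cpos A B (L ! i)) \<le> \<alpha> * tdist (vpos A (L ! i)) (cpos A B c)"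
      using ci assms by (simp add: F)
  next
    case False
    note F = FB[OF False AB_disj]
    have "L ! i \<in> B" using voterAB[OF i] False by auto
    then show "tdist (vpos A (L ! i)) (cpos A B (L ! i)) \<le> \<alpha> * tdist (vpos A (L ! i)) (cpos A B c)"
      using assms by (simp add: F)
  qed
qed

lemma SC_eq: "SC sig (dd A B) c = (\<Sum>a\<in>A. tdist (vpos A a) (cpos A B c)) + (\<Sum>a\<in>B. tdist (vpos A a) (cpos A B c))"
proof -
  have "SC sig (dd A B) c = (\<Sum>i<2*t. tdist (vpos A (L ! i)) (cpos A B c))"
    unfolding SC_def len_sig dd_vc ..
  also have "\<dots> = (\<Sum>a\<in>set P1. tdist (vpos A a) (cpos A B c)) + (\<Sum>a\<in>set P2. tdist (vpos A a) (cpos A B c))"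
    by (rule sum_voters)
  finally show ?thesis using AB by auto
qed

lemma cardAB: "card A = t" "card B = t" "finite A" "finite B" using AB cards by auto

lemma SC_y: "y \<in> B \<Longrightarrow> SC sig (dd A B) y = real t * (2 - s)"
proof -
  assume y: "y \<in> B"
  have yA: "y \<notin> A" using y AB_disj by auto
  have "(\<Sum>a\<in>A. tdist (vpos A a) (cpos A B y)) = (\<Sum>a\<in>A. 2 - s)"
    by (rule sum.cong) (use y yA AB_disj in \<open>auto simp: FA'\<close>)
  moreover have "(\<Sum>a\<in>B. tdist (vpos A a) (cpos A B y)) = (\<Sum>a\<in>B. 0)"
    by (rule sum.cong) (use y yA AB_disj in \<open>auto simp: FB'\<close>)
  ultimately show ?thesis unfolding SC_eq using cardAB by simp
qed

lemma SC_wA: "w \<in> A \<Longrightarrow> SC sig (dd A B) w = s + (real t - 1) * (2 - s) + 2 * real t"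
proof -
  assume w: "w \<in> A"
  have wB: "w \<notin> B" using w AB_disj by auto
  have "(\<Sum>a\<in>A. tdist (vpos A a) (cpos A B w)) = (\<Sum>a\<in>A. if a = w then s else 2 - s)"
    by (rule sum.cong) (use w AB_disj in \<open>auto simp: FA'\<close>)
  also have "\<dots> = s + (\<Sum>a\<in>A - {w}. if a = w then s else 2 - s)"
    by (subst sum.remove[OF cardAB(3) w]) simp
  also have "(\<Sum>a\<in>A - {w}. if a = w then s else 2 - s) = (\<Sum>a\<in>A - {w}. 2 - s)"
    by (rule sum.cong) auto
  also have "\<dots> = (real t - 1) * (2 - s)" using cardAB w t1 by (simp add: of_nat_diff)
  finally have 1: "(\<Sum>a\<in>A. tdist (vpos A a) (cpos A B w)) = s + (real t - 1) * (2 - s)" .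
  have "(\<Sum>a\<in>B. tdist (vpos A a) (cpos A B w)) = (\<Sum>a\<in>B. 2)"
    by (rule sum.cong) (use w wB AB_disj in \<open>auto simp: FB'\<close>)
  then show ?thesis unfolding SC_eq 1 using cardAB by simp
qed

lemma SC_wE: "w \<notin> A \<Longrightarrow> w \<notin> B \<Longrightarrow> SC sig (dd A B) w = real t * (3 - s) + 3 * real t"
proof -
  assume w: "w \<notin> A" "w \<notin> B"
  have "(\<Sum>a\<in>A. tdist (vpos A a) (cpos A B w)) = (\<Sum>a\<in>A. 3 - s)"
    by (rule sum.cong) (use w AB_disj in \<open>auto simp: FA'\<close>)
  moreover have "(\<Sum>a\<in>B. tdist (vpos A a) (cpos A B w)) = (\<Sum>a\<in>B. 3)"
    by (rule sum.cong) (use w AB_disj in \<open>auto simp: FB'\<close>)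
  ultimately show ?thesis unfolding SC_eq using cardAB by simp
qed

lemma SC_nonneg: "0 \<le> SC sig (dd A B) c"
  unfolding SC_def using dd_metric[of UNIV A B] unfolding is_metric_on_def
  by (intro sum_nonneg) auto

end

end


lemma final_step:
  fixes SCw SCy Mn c Bnd :: real
  assumes "Bnd * SCy \<le> SCw" "0 < SCy" "Mn \<le> SCy" "0 \<le> Mn" "c < Bnd" "0 < Bnd"
  shows "c * Mn < SCw"
proof (cases "c \<le> 0")
  case True
  have "c * Mn \<le> 0" using True assms by (simp add: mult_nonpos_nonneg)
  moreover have "0 < Bnd * SCy" using assms by simp
  ultimately show ?thesis using assms by linarith
next
  case False
  have "c * Mn \<le> c * SCy" using False assms by (simp add: mult_left_mono)
  moreover have "c * SCy < Bnd * SCy" using assms by simp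
  ultimately show ?thesis using assms by linarith
qed

theorem theorem2:
  fixes C :: "'c set" and m :: nat and \<alpha> :: real and f :: "'c list list \<Rightarrow> 'c"
  assumes "finite C" and "card C = m" and "m \<ge> 2"
    and "0 \<le> \<alpha>" and "\<alpha> \<le> 1"
    and "is_rule C f"
  shows "distortion_at_least C \<alpha> f (2 + \<alpha> - 2 * (1 - \<alpha>) / real (floor_even m))"
proof -
  obtain L where LC: "set L = C" and dL: "distinct L" using finite_distinct_list[OF assms(1)] by blast
  have lenL: "length L = m" using dL LC assms(2) distinct_card by fastforce
  define t where "t = m div 2"
  define s where "s = 2 * \<alpha> / (1 + \<alpha>)"
  have t1: "1 \<le> t" using assms(3) unfolding t_def by simp
  have tL: "2 * t \<le> length L" using lenL unfolding t_def by simp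
  have pa: "0 < 1 + \<alpha>" using assms(4) by simp
  have seq: "s * (1 + \<alpha>) = 2 * \<alpha>" unfolding s_def using pa by simp
  have s0: "0 \<le> s" unfolding s_def using assms(4) by simp
  have s1: "s \<le> 1" unfolding s_def using assms(4,5) pa by (simp add: divide_le_eq)
  have seq2: "s = \<alpha> * (2 - s)" using seq by (simp add: algebra_simps)
  interpret cons L t s using dL tL t1 s0 s1 by unfold_locales
  define Bnd where "Bnd = 2 + \<alpha> - 2 * (1 - \<alpha>) / real (floor_even m)"
  have fe: "real (floor_even m) = 2 * real t" unfolding floor_even_def t_def by simp
  have tpos: "0 < real t" using t1 by simp
  have Bt: "Bnd * real t = (2 + \<alpha>) * real t - (1 - \<alpha>)"
    unfolding Bnd_def fe using tpos by (simp add: field_simps)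
  have Bform: "Bnd = 2 + \<alpha> - (1 - \<alpha>) / real t" unfolding Bnd_def fe using tpos
    by (simp add: field_simps)
  have Bpos: "0 < Bnd"
  proof -
    have t1r: "1 \<le> real t" using t1 by simp
    have "(1 - \<alpha>) * 1 \<le> (1 - \<alpha>) * real t" using t1r assms(5) by (intro mult_left_mono) auto
    then have "(1 - \<alpha>) / real t \<le> 1 - \<alpha>" using tpos by (simp add: divide_le_eq)
    moreover note Bform
    ultimately show ?thesis using assms(4) by linarith
  qed
  have B3: "Bnd \<le> 3"
  proof -
    have "0 \<le> (1 - \<alpha>) / real t" using assms(5) by simp
    moreover note Bform
    ultimately show ?thesis using assms(5) by linarith
  qed
  have rule: "f sig \<in> C" using assms(6) profile sig_ne LC unfolding is_rule_def by auto
  have main: "\<exists>d. is_metric_on (points (length sig) C) d \<and> consistent sig d \<and> decisive \<alpha> C sig d \<and>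
        SC sig d (f sig) > c * Min (SC sig d ` C)" if cB: "c < Bnd" for c
  proof -
    have gen: "\<exists>d. is_metric_on (points (length sig) C) d \<and> consistent sig d \<and> decisive \<alpha> C sig d \<and>
        SC sig d (f sig) > c * Min (SC sig d ` C)"
      if AB: "(A = set P1 \<and> B = set P2) \<or> (A = set P2 \<and> B = set P1)" and y: "y \<in> B"
        and key: "Bnd * SC sig (dd A B) y \<le> SC sig (dd A B) (f sig)" for A B y
    proof (intro exI conjI)
      show "is_metric_on (points (length sig) C) (dd A B)" by (rule dd_metric)
      show "consistent sig (dd A B)" by (rule consistent_dd[OF AB])
      show "decisive \<alpha> C sig (dd A B)" using decisive_dd[OF AB assms(4) seq2] LC by simp
      have yC: "y \<in> C" using AB y LC setL by auto
      have SCy: "SC sig (dd A B) y = real t * (2 - s)" by (rule SC_y[OF AB y])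
      have SCyp: "0 < SC sig (dd A B) y" unfolding SCy using tpos s1 by simp
      have fin: "finite (SC sig (dd A B) ` C)" using assms(1) by simp
      have Mle: "Min (SC sig (dd A B) ` C) \<le> SC sig (dd A B) y" using fin yC by simp
      have "Min (SC sig (dd A B) ` C) \<in> SC sig (dd A B) ` C" using fin yC by (intro Min_in) auto
      then have M0: "0 \<le> Min (SC sig (dd A B) ` C)" using SC_nonneg[OF AB] by auto
      show "c * Min (SC sig (dd A B) ` C) < SC sig (dd A B) (f sig)"
        by (rule final_step[OF key SCyp Mle M0 cB Bpos])
    qed
    have identity: "s + (real t - 1) * (2 - s) + 2 * real t = Bnd * (real t * (2 - s))"
    proof -
      have "Bnd * (real t * (2 - s)) = (Bnd * real t) * (2 - s)" by (simp only: mult.assoc)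
      also have "\<dots> = ((2 + \<alpha>) * real t - (1 - \<alpha>)) * (2 - s)" by (simp only: Bt)
      also have "\<dots> = 2 * real t * (2 - s) + real t * (\<alpha> * (2 - s)) - (2 - s) + \<alpha> * (2 - s)"
        by (simp add: algebra_simps)
      also have "\<dots> = 2 * real t * (2 - s) + real t * s - (2 - s) + s"
        using seq2 by simp
      finally show ?thesis by (simp add: algebra_simps)
    qed
    have fC: "f sig \<in> set P1 \<union> set P2 \<union> set El" using rule LC setL by auto
    consider "f sig \<in> set P1" | "f sig \<in> set P2" | "f sig \<notin> set P1" "f sig \<notin> set P2" by blast
    then show ?thesis
    proof cases
      case 1
      have AB: "(set P1 = set P1 \<and> set P2 = set P2) \<or> (set P1 = set P2 \<and> set P2 = set P1)" by simp
      have y: "L ! t \<in> set P2" using nthP2[of t] t1 by simp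
      show ?thesis
        by (rule gen[OF AB y]) (simp add: SC_y[OF AB y] SC_wA[OF AB 1] identity)
    next
      case 2
      have AB: "(set P2 = set P1 \<and> set P1 = set P2) \<or> (set P2 = set P2 \<and> set P1 = set P1)" by simp
      have y: "L ! 0 \<in> set P1" using nthP1[of 0] t1 by simp
      show ?thesis
        by (rule gen[OF AB y]) (simp add: SC_y[OF AB y] SC_wA[OF AB 2] identity)
    next
      case 3
      have AB: "(set P1 = set P1 \<and> set P2 = set P2) \<or> (set P1 = set P2 \<and> set P2 = set P1)" by simp
      have y: "L ! t \<in> set P2" using nthP2[of t] t1 by simp
      have "Bnd * (real t * (2 - s)) \<le> 3 * (real t * (2 - s))"
        using B3 tpos s1 by (intro mult_right_mono) auto
      also have "\<dots> \<le> real t * (3 - s) + 3 * real t" using tpos s0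
        by (simp add: algebra_simps)
      finally have ineq: "Bnd * (real t * (2 - s)) \<le> real t * (3 - s) + 3 * real t" .
      show ?thesis
        by (rule gen[OF AB y]) (simp add: SC_y[OF AB y] SC_wE[OF AB 3] ineq)
    qed
  qed
  show ?thesis
    unfolding distortion_at_least_def Bnd_def[symmetric]
    using main profile sig_ne LC by blast
qed

end
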